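(* $\lim_{\lambda\to\infty}\big(\sup_{x\ge0}\,(V(x,\lambda)-x)\big)=0$.
   Context: Fix constants $p>0$ (premium rate), $q>0$ (discount rate), $d>0$, $\beta>0$, $\underline{\lambda}\ge0$, and distribution functions $F_U,F_Y$ of strictly positive random variables with finite expectation. For an initial intensity $\lambda\ge\underline{\lambda}$ the claim intensity is the shot-noise process $\lambda_t=\underline{\lambda}+e^{-dt}(\lambda-\underline{\lambda})+\sum_{k=1}^{\widetilde N_t}Y_k e^{-d(t-T_k)}$, where $\widetilde N_t=\#\{k:T_k\le t\}$ is a Poisson process of rate $\beta$ with arrival times $T_k$ and the $Y_k$ are i.i.d. with distribution $F_Y$, independent of $\widetilde N$. Conditionally on $(\lambda_s)_{s\ge0}$, the claim counting process $N_t=\#\{j:\tau_j\le t\}$ is an inhomogeneous Poisson process with intensity $\lambda_t$ (a Cox process), and the claim sizes $U_j$ are i.i.d. with distribution $F_U$, independent of all the rest. For initial surplus $x\ge0$ the surplus is $X_t=x+pt-\sum_{j=1}^{N_t}U_j$, and $(\mathcal F_t)$ is the completed filtration generated by the intensity jumps $(T_k,Y_k)$ and the claims $(\tau_j,U_j)$ up to time $t$. The premium satisfies $p=(1+\eta)\mathbb E(U_1)\lambda_{\mathrm{av}}$ with $\eta>0$ and $\lambda_{\mathrm{av}}=\lim_{t\to\infty}\mathbb E(\int_0^t\lambda_sds)/t$. A dividend strategy $L=(L_t)_{t\ge0}$ is admissible, $L\in\Pi_{x,\lambda}$, if it is non-decreasing, càdlàg, $(\mathcal F_t)$-adapted, $L_0\ge0$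 and $L_t\le X_t$ for $t<\tau^L$, where $\tau^L=\inf\{t\ge0:X_t-L_{t^-}<0\}$ is the ruin time. Its value is $J(L;x,\lambda)=\mathbb E\big(\int_{0^-}^{\tau^L}e^{-qt}dL_t\big)$ and the optimal value function is $V(x,\lambda)=\sup_{L\in\Pi_{x,\lambda}}J(L;x,\lambda)$ for $x\ge0$, $\lambda\ge\underline{\lambda}$. *)

theory Defs
  imports "HOL-Probability.Probability"
begin

text \<open>A sample point is a sequence of
  i.i.d. quadruples ((E_k, Y_k), (G_j, U_j)): E_k ~ Exp(beta) are the interarrival
  times of the shot Poisson process, Y_k ~ F_Y its marks, G_j ~ Exp(1) the
  interarrival times of a unit-rate Poisson process, U_j ~ F_U the claim sizes.
  The claim process is the Cox process obtained by the random time change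
  N_t = #{j. Gamma_j <= Lambda_t}, Lambda_t = int_0^t lambda_s ds.\<close>

type_synonym omega = "nat \<Rightarrow> (real \<times> real) \<times> (real \<times> real)"

definition base_law :: "real \<Rightarrow> real measure \<Rightarrow> real measure \<Rightarrow> ((real \<times> real) \<times> (real \<times> real)) measure" where
  "base_law beta FY FU =
     (density lborel (exponential_density beta) \<Otimes>\<^sub>M FY) \<Otimes>\<^sub>M
     (density lborel (exponential_density 1) \<Otimes>\<^sub>M FU)"

definition Omega :: "real \<Rightarrow> real measure \<Rightarrow> real measure \<Rightarrow> omega measure" where
  "Omega beta FY FU = PiM UNIV (\<lambda>_::nat. base_law beta FY FU)"

text \<open>Arrival time of the (k+1)-th intensity jump and its mark.\<close>
definition Tj :: "nat \<Rightarrow> omega \<Rightarrow> real" where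
  "Tj k \<omega> = (\<Sum>i\<le>k. fst (fst (\<omega> i)))"

definition Yj :: "nat \<Rightarrow> omega \<Rightarrow> real" where
  "Yj k \<omega> = snd (fst (\<omega> k))"

definition Gam :: "nat \<Rightarrow> omega \<Rightarrow> real" where
  "Gam j \<omega> = (\<Sum>i\<le>j. fst (snd (\<omega> i)))"

definition Uj :: "nat \<Rightarrow> omega \<Rightarrow> real" where
  "Uj j \<omega> = snd (snd (\<omega> j))"

definition lam :: "real \<Rightarrow> real \<Rightarrow> real \<Rightarrow> real \<Rightarrow> omega \<Rightarrow> real" where
  "lam lb d l0 t \<omega> = lb + exp (- d * t) * (l0 - lb) +
     (\<Sum>k\<in>{k. Tj k \<omega> \<le> t}. Yj k \<omega> * exp (- d * (t - Tj k \<omega>)))"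

definition Lam :: "real \<Rightarrow> real \<Rightarrow> real \<Rightarrow> real \<Rightarrow> omega \<Rightarrow> real" where
  "Lam lb d l0 t \<omega> = (LBINT s:{0..t}. lam lb d l0 s \<omega>)"

definition tau :: "real \<Rightarrow> real \<Rightarrow> real \<Rightarrow> nat \<Rightarrow> omega \<Rightarrow> real" where
  "tau lb d l0 j \<omega> = Inf {t. 0 \<le> t \<and> Gam j \<omega> \<le> Lam lb d l0 t \<omega>}"

definition surplus :: "real \<Rightarrow> real \<Rightarrow> real \<Rightarrow> real \<Rightarrow> real \<Rightarrow> real \<Rightarrow> omega \<Rightarrow> real" where
  "surplus p lb d l0 x t \<omega> = x + p * t - (\<Sum>j\<in>{j. tau lb d l0 j \<omega> \<le> t}. Uj j \<omega>)"

definition gens :: "real \<Rightarrow> real \<Rightarrow> real \<Rightarrow> real \<Rightarrow> (omega \<Rightarrow> real) set" where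
  "gens lb d l0 t =
     (\<Union>k. {\<lambda>\<omega>. if Tj k \<omega> \<le> t then 1 else 0,
            \<lambda>\<omega>. if Tj k \<omega> \<le> t then Tj k \<omega> else 0,
            \<lambda>\<omega>. if Tj k \<omega> \<le> t then Yj k \<omega> else 0}) \<union>
     (\<Union>j. {\<lambda>\<omega>. if tau lb d l0 j \<omega> \<le> t then 1 else 0,
            \<lambda>\<omega>. if tau lb d l0 j \<omega> \<le> t then tau lb d l0 j \<omega> else 0,
            \<lambda>\<omega>. if tau lb d l0 j \<omega> \<le> t then Uj j \<omega> else 0})"

definition filt :: "omega measure \<Rightarrow> real \<Rightarrow> real \<Rightarrow> real \<Rightarrow> real \<Rightarrow> omega set set" where
  "filt S lb d l0 t = sigma_sets (space S)
     ({g -` B \<inter> space S | g B. g \<in> gens lb d l0 t \<and> B \<in> sets borel} \<union> null_sets (completion S))"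

definition Lleft :: "(real \<Rightarrow> omega \<Rightarrow> real) \<Rightarrow> real \<Rightarrow> omega \<Rightarrow> real" where
  "Lleft L t \<omega> = (if t \<le> 0 then 0 else Lim (at_left t) (\<lambda>s. L s \<omega>))"

text \<open>Ruin time tau^L (infinite if no ruin).\<close>
definition ruin_time :: "real \<Rightarrow> real \<Rightarrow> real \<Rightarrow> real \<Rightarrow> real \<Rightarrow> (real \<Rightarrow> omega \<Rightarrow> real) \<Rightarrow> omega \<Rightarrow> ereal" where
  "ruin_time p lb d l0 x L \<omega> =
     Inf (ereal ` {t. 0 \<le> t \<and> surplus p lb d l0 x t \<omega> - Lleft L t \<omega> < 0})"

definition admissible :: "omega measure \<Rightarrow> real \<Rightarrow> real \<Rightarrow> real \<Rightarrow> real \<Rightarrow> real \<Rightarrow> (real \<Rightarrow> omega \<Rightarrow> real) set" where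
  "admissible S p lb d l0 x = {L.
     (\<forall>\<omega>\<in>space S.
        mono_on {0..} (\<lambda>t. L t \<omega>) \<and>
        (\<forall>t\<ge>0. continuous (at_right t) (\<lambda>s. L s \<omega>)) \<and>
        (\<forall>t>0. \<exists>l. ((\<lambda>s. L s \<omega>) \<longlongrightarrow> l) (at_left t)) \<and>
        0 \<le> L 0 \<omega> \<and>
        (\<forall>t\<ge>0. ereal t < ruin_time p lb d l0 x L \<omega> \<longrightarrow> L t \<omega> \<le> surplus p lb d l0 x t \<omega>)) \<and>
     (\<forall>t\<ge>0. \<forall>B\<in>sets borel. (\<lambda>\<omega>. L t \<omega>) -` B \<inter> space S \<in> filt S lb d l0 t)}"

text \<open>Value of a strategy: E int_{[0,tau^L)} e^{-qt} dL_t, the Lebesgue-Stieltjes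
  measure of L (extended by 0 to negative times, so the initial lump L_0 is counted).\<close>
definition Jval :: "omega measure \<Rightarrow> real \<Rightarrow> real \<Rightarrow> real \<Rightarrow> real \<Rightarrow> real \<Rightarrow> real \<Rightarrow> (real \<Rightarrow> omega \<Rightarrow> real) \<Rightarrow> ereal" where
  "Jval S p q lb d l0 x L = enn2ereal (\<integral>\<^sup>+ \<omega>.
      (\<integral>\<^sup>+ s. indicator {s. 0 \<le> s \<and> ereal s < ruin_time p lb d l0 x L \<omega>} s * ennreal (exp (- q * s))
         \<partial>interval_measure (\<lambda>s. if s < 0 then 0 else L s \<omega>))
    \<partial>completion S)"

definition Vfun :: "real \<Rightarrow> real \<Rightarrow> real \<Rightarrow> real \<Rightarrow> real \<Rightarrow> real measure \<Rightarrow> real measure \<Rightarrow> real \<Rightarrow> real \<Rightarrow> ereal" where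
  "Vfun p q d beta lb FY FU x l0 =
     (SUP L\<in>admissible (Omega beta FY FU) p lb d l0 x. Jval (Omega beta FY FU) p q lb d l0 x L)"

end

theory Submission
  imports Defs
begin

lemma AE_fst_pair:
  assumes "sigma_finite_measure M1" "sigma_finite_measure M2" "Measurable.pred M1 P" "AE x in M1. P x"
  shows "AE z in M1 \<Otimes>\<^sub>M M2. P (fst z)"
proof -
  interpret pair_sigma_finite M1 M2 using assms by (simp add: pair_sigma_finite_def)
  show ?thesis
    by (rule AE_pair_measure) (use assms in \<open>auto elim!: AE_mp\<close>)
qed

lemma AE_snd_pair:
  assumes "sigma_finite_measure M1" "sigma_finite_measure M2" "Measurable.pred M2 P" "AE x in M2. P x"
  shows "AE z in M1 \<Otimes>\<^sub>M M2. P (snd z)"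
proof -
  interpret pair_sigma_finite M1 M2 using assms by (simp add: pair_sigma_finite_def)
  show ?thesis
    by (rule AE_pair_measure) (use assms in \<open>auto\<close>)
qed

lemma nn_integral_fst_pair:
  assumes "prob_space M2" "sigma_finite_measure M1" "g \<in> borel_measurable M1"
  shows "(\<integral>\<^sup>+ z. g (fst z) \<partial>(M1 \<Otimes>\<^sub>M M2)) = (\<integral>\<^sup>+ x. g x \<partial>M1)"
proof -
  interpret M2: prob_space M2 by fact
  have "(\<integral>\<^sup>+ z. g (fst z) \<partial>(M1 \<Otimes>\<^sub>M M2)) = (\<integral>\<^sup>+ x. \<integral>\<^sup>+ y. g x \<partial>M2 \<partial>M1)"
    by (subst M2.nn_integral_fst[symmetric]) (use assms in auto)
  also have "\<dots> = (\<integral>\<^sup>+ x. g x \<partial>M1)"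
    by (simp add: M2.emeasure_space_1)
  finally show ?thesis .
qed

lemma nn_integral_snd_pair:
  assumes "prob_space M1" "sigma_finite_measure M2" "g \<in> borel_measurable M2"
  shows "(\<integral>\<^sup>+ z. g (snd z) \<partial>(M1 \<Otimes>\<^sub>M M2)) = (\<integral>\<^sup>+ x. g x \<partial>M2)"
proof -
  interpret M1: prob_space M1 by fact
  interpret pair_sigma_finite M1 M2 using assms
    by (simp add: pair_sigma_finite_def M1.sigma_finite_measure_axioms)
  have "(\<integral>\<^sup>+ z. g (snd z) \<partial>(M1 \<Otimes>\<^sub>M M2)) = (\<integral>\<^sup>+ y. \<integral>\<^sup>+ x. g y \<partial>M1 \<partial>M2)"
    by (subst nn_integral_snd[symmetric]) (use assms in auto)
  also have "\<dots> = (\<integral>\<^sup>+ x. g x \<partial>M2)"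
    by (simp add: M1.emeasure_space_1)
  finally show ?thesis .
qed

definition good :: "omega \<Rightarrow> bool" where
  "good \<omega> \<longleftrightarrow> (\<forall>i. 0 < fst (fst (\<omega> i))) \<and> (\<forall>i. 0 < snd (fst (\<omega> i))) \<and>
     (\<forall>i. 0 < fst (snd (\<omega> i))) \<and> (\<forall>i. 0 < snd (snd (\<omega> i))) \<and>
     (\<forall>K. \<exists>k. K < Tj k \<omega>) \<and> (\<forall>K. \<exists>k. K < Gam k \<omega>) \<and> (\<forall>K. \<exists>k. K < (\<Sum>i\<le>k. Yj i \<omega>))"

lemma AE_exp_pos: "AE y in density lborel (exponential_density l). 0 < y"
proof -
  have "AE y in lborel. y \<noteq> 0" by (rule AE_lborel_singleton)
  then have "AE y in lborel. 0 < ennreal (exponential_density l y) \<longrightarrow> 0 < y"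
    by eventually_elim (auto simp: exponential_density_def)
  then show ?thesis by (subst AE_density) auto
qed

locale model =
  fixes beta :: real and FY FU :: "real measure"
  assumes beta: "beta > 0"
    and FY: "prob_space FY" "sets FY = sets borel" "AE y in FY. y > 0"
    and FU: "prob_space FU" "sets FU = sets borel" "AE u in FU. u > 0"
begin

abbreviation "Eb \<equiv> density lborel (exponential_density beta)"
abbreviation "E1 \<equiv> density lborel (exponential_density 1)"
abbreviation "B \<equiv> base_law beta FY FU"
abbreviation "S \<equiv> Omega beta FY FU"

lemma Eb_prob: "prob_space Eb" using beta by (rule prob_space_exponential_density)
lemma E1_prob: "prob_space E1" by (rule prob_space_exponential_density) simp

lemma B_prob: "prob_space B"
  unfolding base_law_def
  by (intro prob_space_pair Eb_prob E1_prob FY FU)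

lemma PP: "product_prob_space (\<lambda>_::nat. B)"
  using B_prob by (simp add: product_prob_space_def product_prob_space_axioms_def product_sigma_finite_def prob_space_imp_sigma_finite)

lemma S_prob: "prob_space S"
  unfolding Omega_def by (intro prob_space_PiM B_prob)

lemma sets_FY[measurable_cong]: "sets FY = sets borel" using FY by simp
lemma sets_FU[measurable_cong]: "sets FU = sets borel" using FU by simp

lemma meas_c1[measurable]: "(\<lambda>z. fst (fst z)) \<in> borel_measurable B"
  unfolding base_law_def by measurable
lemma meas_c2[measurable]: "(\<lambda>z. snd (fst z)) \<in> borel_measurable B"
  unfolding base_law_def by measurable
lemma meas_c3[measurable]: "(\<lambda>z. fst (snd z)) \<in> borel_measurable B"
  unfolding base_law_def by measurable
lemma meas_c4[measurable]: "(\<lambda>z. snd (snd z)) \<in> borel_measurable B"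
  unfolding base_law_def by measurable

lemma meas_comp[measurable]: "(\<lambda>\<omega>. \<omega> i) \<in> measurable S B"
  unfolding Omega_def by measurable

lemma space_B: "space B = UNIV"
  unfolding base_law_def using sets_eq_imp_space_eq[OF sets_FY] sets_eq_imp_space_eq[OF sets_FU]
  by (simp add: space_pair_measure)

lemma space_S: "space S = UNIV"
  unfolding Omega_def by (simp add: space_PiM space_B)

lemma prod_integral:
  assumes g[measurable]: "g \<in> borel_measurable B" and J: "finite J"
  shows "(\<integral>\<^sup>+ \<omega>. (\<Prod>i\<in>J. g (\<omega> i)) \<partial>S) = (\<integral>\<^sup>+ z. g z \<partial>B) ^ card J"
proof -
  interpret product_prob_space "\<lambda>_::nat. B" UNIV by (rule PP)
  have "(\<integral>\<^sup>+ \<omega>. (\<Prod>i\<in>J. g (\<omega> i)) \<partial>S) =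
      (\<integral>\<^sup>+ y. (\<Prod>i\<in>J. g (y i)) \<partial>distr S (PiM J (\<lambda>_. B)) (\<lambda>x. restrict x J))"
    unfolding Omega_def
    by (subst nn_integral_distr) (auto intro!: nn_integral_cong prod.cong)
  also have "\<dots> = (\<integral>\<^sup>+ y. (\<Prod>i\<in>J. g (y i)) \<partial>PiM J (\<lambda>_. B))"
    unfolding Omega_def by (subst distr_PiM_restrict_finite) (use J in auto)
  also have "\<dots> = (\<Prod>i\<in>J. (\<integral>\<^sup>+ z. g z \<partial>B))"
    by (rule product_nn_integral_prod) (use J in auto)
  finally show ?thesis by simp
qed

lemma chernoff:
  assumes f[measurable]: "f \<in> borel_measurable B"
  shows "emeasure S {\<omega>. (\<Sum>i<n. f (\<omega> i)) \<le> K} \<le> ennreal (exp K) * (\<integral>\<^sup>+ z. ennreal (exp (- f z)) \<partial>B) ^ n"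
proof -
  have "emeasure S {\<omega>. (\<Sum>i<n. f (\<omega> i)) \<le> K} = (\<integral>\<^sup>+ \<omega>. indicator {\<omega>. (\<Sum>i<n. f (\<omega> i)) \<le> K} \<omega> \<partial>S)"
  proof (subst nn_integral_indicator)
    have "{\<omega>\<in>space S. (\<Sum>i<n. f (\<omega> i)) \<le> K} \<in> sets S" by measurable
    then show "{\<omega>. (\<Sum>i<n. f (\<omega> i)) \<le> K} \<in> sets S" by (simp add: space_S)
  qed simp
  also have "\<dots> \<le> (\<integral>\<^sup>+ \<omega>. ennreal (exp K) * (\<Prod>i\<in>{..<n}. ennreal (exp (- f (\<omega> i)))) \<partial>S)"
  proof (intro nn_integral_mono)
    fix \<omega>
    show "indicator {\<omega>. (\<Sum>i<n. f (\<omega> i)) \<le> K} \<omega> \<le> ennreal (exp K) * (\<Prod>i\<in>{..<n}. ennreal (exp (- f (\<omega> i))))"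
    proof (cases "(\<Sum>i<n. f (\<omega> i)) \<le> K")
      case True
      have "(\<Prod>i\<in>{..<n}. ennreal (exp (- f (\<omega> i)))) = ennreal (exp (- (\<Sum>i<n. f (\<omega> i))))"
        by (simp add: prod_ennreal exp_sum[symmetric] sum_negf)
      then have "ennreal (exp K) * (\<Prod>i\<in>{..<n}. ennreal (exp (- f (\<omega> i)))) = ennreal (exp (K - (\<Sum>i<n. f (\<omega> i))))"
        by (simp add: ennreal_mult'[symmetric] exp_diff exp_minus field_simps)
      also have "\<dots> \<ge> 1" using True by simp
      finally show ?thesis using True by simp
    qed simp
  qed
  also have "\<dots> = ennreal (exp K) * (\<integral>\<^sup>+ \<omega>. (\<Prod>i\<in>{..<n}. ennreal (exp (- f (\<omega> i)))) \<partial>S)"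
    by (rule nn_integral_cmult) measurable
  also have "\<dots> = ennreal (exp K) * (\<integral>\<^sup>+ z. ennreal (exp (- f z)) \<partial>B) ^ n"
    by (subst prod_integral) auto
  finally show ?thesis .
qed

lemma exp_neg_lt1:
  fixes f :: "_ \<Rightarrow> real"
  assumes f[measurable]: "f \<in> borel_measurable B" and pos: "AE z in B. 0 < f z"
  shows "(\<integral>\<^sup>+ z. ennreal (exp (- f z)) \<partial>B) < 1"
proof -
  interpret prob_space B by (rule B_prob)
  define g where "g z = exp (- max 0 (f z))" for z
  have [measurable]: "g \<in> borel_measurable B" unfolding g_def by measurable
  have g01: "0 \<le> g z" "g z \<le> 1" for z unfolding g_def by auto
  have ig: "integrable B g"
    by (rule integrable_const_bound[where B=1]) (use g01 in auto)
  have ih: "integrable B (\<lambda>z. 1 - g z)" using ig by auto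
  have "integral\<^sup>L B (\<lambda>z. 1 - g z) \<noteq> 0"
  proof
    assume "integral\<^sup>L B (\<lambda>z. 1 - g z) = 0"
    then have "AE z in B. 1 - g z = 0"
      using integral_nonneg_eq_0_iff_AE[OF ih] g01 by auto
    with pos have "AE z in B. False"
      by eventually_elim (auto simp: g_def)
    then show False by simp
  qed
  moreover have "integral\<^sup>L B (\<lambda>z. 1 - g z) \<ge> 0"
    using g01 by (intro integral_nonneg_AE) auto
  ultimately have lt: "integral\<^sup>L B g < 1"
    using ig by (simp add: prob_space)
  have "(\<integral>\<^sup>+ z. ennreal (exp (- f z)) \<partial>B) = (\<integral>\<^sup>+ z. ennreal (g z) \<partial>B)"
    using pos by (intro nn_integral_cong_AE) (auto simp: g_def)
  also have "\<dots> = ennreal (integral\<^sup>L B g)"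
    by (rule nn_integral_eq_integral[OF ig]) (use g01 in auto)
  also have "\<dots> < 1" using lt by simp
  finally show ?thesis .
qed

lemma power_ennreal_lim0:
  fixes c :: ennreal assumes "c < 1" and Cfin: "C \<noteq> top"
  shows "(\<lambda>n. C * c ^ n) \<longlonglongrightarrow> 0"
proof -
  obtain r where r: "c = ennreal r" "0 \<le> r" "r < 1"
    using assms by (cases c) auto
  obtain C' where C: "C = ennreal C'" "0 \<le> C'" using Cfin by (cases C) auto
  have "(\<lambda>n. C' * r ^ n) \<longlonglongrightarrow> C' * 0"
    by (intro tendsto_mult tendsto_const LIMSEQ_power_zero) (use r in auto)
  then have "(\<lambda>n. ennreal (C' * r ^ n)) \<longlonglongrightarrow> ennreal 0"
    by (intro tendsto_ennrealI) simp
  then show ?thesis using r C by (simp add: ennreal_mult' ennreal_power)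
qed

lemma diverge_AE:
  fixes f :: "_ \<Rightarrow> real"
  assumes f[measurable]: "f \<in> borel_measurable B" and pos: "AE z in B. 0 < f z"
  shows "AE \<omega> in S. \<forall>K. \<exists>k. K < (\<Sum>i\<le>k. f (\<omega> i))"
proof (rule AE_I')
  define c where "c = (\<integral>\<^sup>+ z. ennreal (exp (- f z)) \<partial>B)"
  have c1: "c < 1" unfolding c_def by (rule exp_neg_lt1[OF f pos])
  define N where "N K = {\<omega>\<in>space S. \<forall>k. (\<Sum>i<Suc k. f (\<omega> i)) \<le> real K}" for K :: nat
  have [measurable]: "N K \<in> sets S" for K unfolding N_def by measurable
  have "N K \<in> null_sets S" for K
  proof -
    have le: "emeasure S (N K) \<le> ennreal (exp (real K)) * c ^ (Suc k)" for k
    proof -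
      have "emeasure S (N K) \<le> emeasure S {\<omega>. (\<Sum>i<Suc k. f (\<omega> i)) \<le> real K}"
      proof (rule emeasure_mono)
        show "N K \<subseteq> {\<omega>. (\<Sum>i<Suc k. f (\<omega> i)) \<le> real K}" unfolding N_def by auto
        have "{\<omega>\<in>space S. (\<Sum>i<Suc k. f (\<omega> i)) \<le> real K} \<in> sets S" by measurable
        then show "{\<omega>. (\<Sum>i<Suc k. f (\<omega> i)) \<le> real K} \<in> sets S" by (simp add: space_S)
      qed
      also have "\<dots> \<le> ennreal (exp (real K)) * c ^ (Suc k)"
        unfolding c_def by (rule chernoff[OF f])
      finally show ?thesis .
    qed
    have "(\<lambda>k. ennreal (exp (real K)) * c ^ (Suc k)) \<longlonglongrightarrow> 0"
      using LIMSEQ_Suc[OF power_ennreal_lim0[OF c1, of "ennreal (exp (real K))"]] by simp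
    then have "emeasure S (N K) \<le> 0"
      by (intro LIMSEQ_le_const) (use le in auto)
    then show ?thesis by auto
  qed
  then show "(\<Union>K. N K) \<in> null_sets S" by blast
  show "{\<omega> \<in> space S. \<not> (\<forall>K. \<exists>k. K < (\<Sum>i\<le>k. f (\<omega> i)))} \<subseteq> (\<Union>K. N K)"
  proof (intro subsetI)
    fix \<omega> assume "\<omega> \<in> {\<omega> \<in> space S. \<not> (\<forall>K. \<exists>k. K < (\<Sum>i\<le>k. f (\<omega> i)))}"
    then obtain K where "\<omega> \<in> space S" and nk: "\<forall>k. \<not> K < (\<Sum>i\<le>k. f (\<omega> i))" by auto
    have "\<forall>k. (\<Sum>i<Suc k. f (\<omega> i)) \<le> real (nat \<lceil>K\<rceil>)"
    proof
      fix k
      have "(\<Sum>i<Suc k. f (\<omega> i)) = (\<Sum>i\<le>k. f (\<omega> i))" using lessThan_Suc_atMost by simp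
      also have "\<dots> \<le> K" using nk by (meson not_less)
      also have "K \<le> real (nat \<lceil>K\<rceil>)" by linarith
      finally show "(\<Sum>i<Suc k. f (\<omega> i)) \<le> real (nat \<lceil>K\<rceil>)" .
    qed
    then show "\<omega> \<in> (\<Union>K. N K)" using \<open>\<omega> \<in> space S\<close> unfolding N_def by blast
  qed
qed

lemma sf: "sigma_finite_measure Eb" "sigma_finite_measure E1" "sigma_finite_measure FY" "sigma_finite_measure FU"
  "sigma_finite_measure (Eb \<Otimes>\<^sub>M FY)" "sigma_finite_measure (E1 \<Otimes>\<^sub>M FU)"
  using Eb_prob E1_prob FY FU prob_space_pair[OF Eb_prob FY(1)] prob_space_pair[OF E1_prob FU(1)]
  by (auto intro: prob_space_imp_sigma_finite)

lemma AE_B_pos: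
  "AE z in B. 0 < fst (fst z)" "AE z in B. 0 < snd (fst z)"
  "AE z in B. 0 < fst (snd z)" "AE z in B. 0 < snd (snd z)"
proof -
  show "AE z in B. 0 < fst (fst z)" unfolding base_law_def
    by (rule AE_fst_pair[where P="\<lambda>z. 0 < fst z", OF sf(5) sf(6) _ AE_fst_pair[OF sf(1) sf(3) _ AE_exp_pos]])
      measurable
  show "AE z in B. 0 < snd (fst z)" unfolding base_law_def
    by (rule AE_fst_pair[where P="\<lambda>z. 0 < snd z", OF sf(5) sf(6) _ AE_snd_pair[OF sf(1) sf(3) _ FY(3)]])
      measurable
  show "AE z in B. 0 < fst (snd z)" unfolding base_law_def
    by (rule AE_snd_pair[where P="\<lambda>z. 0 < fst z", OF sf(5) sf(6) _ AE_fst_pair[OF sf(2) sf(4) _ AE_exp_pos]])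
      measurable
  show "AE z in B. 0 < snd (snd z)" unfolding base_law_def
    by (rule AE_snd_pair[where P="\<lambda>z. 0 < snd z", OF sf(5) sf(6) _ AE_snd_pair[OF sf(2) sf(4) _ FU(3)]])
      measurable
qed

lemma AE_comp: "AE z in B. P z \<Longrightarrow> AE \<omega> in S. P (\<omega> i)"
proof -
  interpret product_prob_space "\<lambda>_::nat. B" UNIV by (rule PP)
  show "AE z in B. P z \<Longrightarrow> AE \<omega> in S. P (\<omega> i)"
    unfolding Omega_def by (rule AE_component) auto
qed

lemma AE_good: "AE \<omega> in S. good \<omega>"
proof -
  have a1: "AE \<omega> in S. \<forall>i. 0 < fst (fst (\<omega> i))"
    by (subst AE_all_countable) (auto intro: AE_comp AE_B_pos)
  have a2: "AE \<omega> in S. \<forall>i. 0 < snd (fst (\<omega> i))"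
    by (subst AE_all_countable) (auto intro: AE_comp AE_B_pos)
  have a3: "AE \<omega> in S. \<forall>i. 0 < fst (snd (\<omega> i))"
    by (subst AE_all_countable) (auto intro: AE_comp AE_B_pos)
  have a4: "AE \<omega> in S. \<forall>i. 0 < snd (snd (\<omega> i))"
    by (subst AE_all_countable) (auto intro: AE_comp AE_B_pos)
  have a5: "AE \<omega> in S. \<forall>K. \<exists>k. K < Tj k \<omega>"
    unfolding Tj_def by (rule diverge_AE[OF meas_c1 AE_B_pos(1)])
  have a6: "AE \<omega> in S. \<forall>K. \<exists>k. K < Gam k \<omega>"
    unfolding Gam_def by (rule diverge_AE[OF meas_c3 AE_B_pos(3)])
  have a7: "AE \<omega> in S. \<forall>K. \<exists>k. K < (\<Sum>i\<le>k. Yj i \<omega>)"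
    unfolding Yj_def by (rule diverge_AE[OF meas_c2 AE_B_pos(2)])
  show ?thesis using a1 a2 a3 a4 a5 a6 a7 unfolding good_def by eventually_elim auto
qed

end


lemma psum_mono:
  fixes a :: "nat \<Rightarrow> real"
  assumes "\<forall>i. 0 < a i" "k \<le> k'"
  shows "(\<Sum>i\<le>k. a i) \<le> (\<Sum>i\<le>k'. a i)"
  using assms by (intro sum_mono2) (auto intro: less_imp_le)

lemma psum_finite:
  fixes a :: "nat \<Rightarrow> real"
  assumes "\<forall>i. 0 < a i" "\<forall>K. \<exists>k. K < (\<Sum>i\<le>k. a i)"
  shows "finite {k. (\<Sum>i\<le>k. a i) \<le> t}"
proof -
  obtain k0 where k0: "t < (\<Sum>i\<le>k0. a i)" using assms(2) by blast
  have "{k. (\<Sum>i\<le>k. a i) \<le> t} \<subseteq> {..<k0}"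
  proof
    fix k assume "k \<in> {k. (\<Sum>i\<le>k. a i) \<le> t}"
    then have "(\<Sum>i\<le>k. a i) \<le> t" by simp
    moreover have "k0 \<le> k \<Longrightarrow> (\<Sum>i\<le>k0. a i) \<le> (\<Sum>i\<le>k. a i)" by (rule psum_mono[OF assms(1)])
    ultimately show "k \<in> {..<k0}" using k0 by force
  qed
  then show ?thesis by (rule finite_subset) simp
qed

locale path =
  fixes lb d l0 :: real and \<omega> :: omega
  assumes good: "good \<omega>" and lb: "0 \<le> lb" and l0: "lb \<le> l0" and d: "0 < d"
begin

lemma pos: "0 < fst (fst (\<omega> i))" "0 < snd (fst (\<omega> i))" "0 < fst (snd (\<omega> i))" "0 < snd (snd (\<omega> i))"
  using good unfolding good_def by auto

lemma Y_pos: "0 < Yj k \<omega>" using pos unfolding Yj_def by simp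
lemma U_pos: "0 < Uj k \<omega>" using pos unfolding Uj_def by simp

lemma Tj_mono: "k \<le> k' \<Longrightarrow> Tj k \<omega> \<le> Tj k' \<omega>"
  unfolding Tj_def by (rule psum_mono) (use pos in auto)
lemma Gam_mono: "k \<le> k' \<Longrightarrow> Gam k \<omega> \<le> Gam k' \<omega>"
  unfolding Gam_def by (rule psum_mono) (use pos in auto)
lemma Tj_pos: "0 < Tj k \<omega>"
  unfolding Tj_def using pos by (intro sum_pos) auto
lemma Gam_ge0: "Gam 0 \<omega> \<le> Gam k \<omega>" by (rule Gam_mono) simp
lemma Gam0_pos: "0 < Gam 0 \<omega>" unfolding Gam_def using pos by simp

lemma Tj_fin: "finite {k. Tj k \<omega> \<le> t}"
  unfolding Tj_def by (rule psum_finite) (use good pos in \<open>auto simp: good_def Tj_def\<close>)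
lemma Gam_fin: "finite {k. Gam k \<omega> \<le> t}"
  unfolding Gam_def by (rule psum_finite) (use good pos in \<open>auto simp: good_def Gam_def\<close>)

definition "Kset c = {k. Tj k \<omega> \<le> c}"

definition "lamc c s = lb + exp (- d * s) * (l0 - lb) +
   (\<Sum>k\<in>Kset c. if Tj k \<omega> \<le> s then Yj k \<omega> * exp (- d * (s - Tj k \<omega>)) else 0)"

definition "Bd c = lb + (l0 - lb) + (\<Sum>k\<in>Kset c. Yj k \<omega>)"

abbreviation "la s \<equiv> lam lb d l0 s \<omega>"
abbreviation "La t \<equiv> Lam lb d l0 t \<omega>"

lemma lam_eq: "s \<le> c \<Longrightarrow> la s = lamc c s"
proof -
  assume sc: "s \<le> c"
  have "{k. Tj k \<omega> \<le> s} = {k \<in> Kset c. Tj k \<omega> \<le> s}" using sc unfolding Kset_def by auto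
  have fin: "finite (Kset c)" unfolding Kset_def by (rule Tj_fin)
  have "(\<Sum>k\<in>{k. Tj k \<omega> \<le> s}. Yj k \<omega> * exp (- d * (s - Tj k \<omega>))) =
     (\<Sum>k\<in>Kset c. if Tj k \<omega> \<le> s then Yj k \<omega> * exp (- d * (s - Tj k \<omega>)) else 0)"
    unfolding \<open>{k. Tj k \<omega> \<le> s} = {k \<in> Kset c. Tj k \<omega> \<le> s}\<close> by (rule sum.inter_filter[OF fin])
  then show ?thesis
    unfolding lam_def lamc_def by simp
qed

lemma lamc_meas[measurable]: "lamc c \<in> borel_measurable borel"
  unfolding lamc_def by measurable


lemma lam_lower: "lb + exp (- d * s) * (l0 - lb) \<le> la s"
proof -
  have "0 \<le> (\<Sum>k\<in>{k. Tj k \<omega> \<le> s}. Yj k \<omega> * exp (- d * (s - Tj k \<omega>)))"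
    using Y_pos by (intro sum_nonneg) (simp add: less_imp_le)
  then show ?thesis unfolding lam_def by simp
qed

lemma lam_nonneg: "0 \<le> la s"
  using lam_lower[of s] lb l0 by (smt (verit) exp_ge_zero mult_nonneg_nonneg)

lemma lam_lower2: "0 \<le> s \<Longrightarrow> s \<le> t \<Longrightarrow> (l0 - lb) * exp (- d * t) \<le> la s"
proof -
  assume "0 \<le> s" "s \<le> t"
  then have "exp (- d * t) \<le> exp (- d * s)" using d by simp
  then have "(l0 - lb) * exp (- d * t) \<le> exp (- d * s) * (l0 - lb)"
    using l0 by (simp add: mult_left_mono mult.commute)
  then show ?thesis using lam_lower[of s] lb by linarith
qed

lemma lam_upper: "0 \<le> s \<Longrightarrow> s \<le> c \<Longrightarrow> la s \<le> Bd c"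
proof -
  assume s: "0 \<le> s" "s \<le> c"
  have "exp (- d * s) * (l0 - lb) \<le> 1 * (l0 - lb)"
    using s d l0 by (intro mult_right_mono) auto
  moreover have "(\<Sum>k\<in>Kset c. if Tj k \<omega> \<le> s then Yj k \<omega> * exp (- d * (s - Tj k \<omega>)) else 0)
      \<le> (\<Sum>k\<in>Kset c. Yj k \<omega>)"
  proof (rule sum_mono)
    fix k
    show "(if Tj k \<omega> \<le> s then Yj k \<omega> * exp (- d * (s - Tj k \<omega>)) else 0) \<le> Yj k \<omega>"
      using Y_pos[of k] d by (auto intro!: mult_left_le simp: less_imp_le)
  qed
  moreover have "la s = lamc c s" by (rule lam_eq[OF s(2)])
  ultimately show ?thesis unfolding lamc_def Bd_def by (smt (verit))
qed

lemma Bd_nonneg: "0 \<le> Bd c"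
  unfolding Bd_def using lb l0 Y_pos by (smt (verit) sum_nonneg less_imp_le)

lemma lam_int: "set_integrable lborel {0..t} la"
proof -
  have "integrable lborel (\<lambda>s. indicator {0..t} s *\<^sub>R lamc t s)"
  proof (rule integrableI_bounded_set_indicator[where B="Bd t"])
    show "AE x in lborel. x \<in> {0..t} \<longrightarrow> norm (lamc t x) \<le> Bd t"
      using lam_upper lam_eq lam_nonneg by (auto intro!: AE_I2) (metis abs_of_nonneg)
  qed (auto simp: emeasure_lborel_Icc_eq)
  moreover have "(\<lambda>s. indicator {0..t} s *\<^sub>R lamc t s) = (\<lambda>s. indicator {0..t} s *\<^sub>R la s)"
    using lam_eq[of _ t] by (auto split: split_indicator)
  ultimately show ?thesis unfolding set_integrable_def by simp
qed

lemma Lam_eq: "La t = (\<integral>s. indicator {0..t} s * la s \<partial>lborel)"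
  unfolding Lam_def set_lebesgue_integral_def by simp

lemma Lam_nonneg: "0 \<le> La t"
  unfolding Lam_eq using lam_nonneg by (intro integral_nonneg_AE) auto

lemma Lam_mono: "t \<le> t' \<Longrightarrow> La t \<le> La t'"
  unfolding Lam_eq
  using lam_int[of t] lam_int[of t'] lam_nonneg unfolding set_integrable_def
  by (intro integral_mono) (auto split: split_indicator)

lemma Lam_lower: "0 \<le> t \<Longrightarrow> (l0 - lb) * exp (- d * t) * t \<le> La t"
proof -
  assume t: "0 \<le> t"
  have "(LINT s:{0..t}|lborel. (l0 - lb) * exp (- d * t)) \<le> (LINT s:{0..t}|lborel. la s)"
    by (rule set_integral_mono) (use lam_int lam_lower2 in \<open>auto simp: set_integrable_def emeasure_lborel_Icc_eq\<close>)
  then show ?thesis using t unfolding Lam_def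
    by (subst (asm) set_integral_const) (auto simp: emeasure_lborel_Icc_eq mult.commute)
qed

lemma Lam_upper: "0 \<le> t \<Longrightarrow> t \<le> c \<Longrightarrow> La t \<le> Bd c * t"
proof -
  assume t: "0 \<le> t" "t \<le> c"
  have "(LINT s:{0..t}|lborel. la s) \<le> (LINT s:{0..t}|lborel. Bd c)"
    by (rule set_integral_mono) (use lam_int lam_upper t in \<open>auto simp: set_integrable_def emeasure_lborel_Icc_eq\<close>)
  then show ?thesis using t unfolding Lam_def
    by (subst (asm) set_integral_const) (auto simp: emeasure_lborel_Icc_eq mult.commute)
qed

lemma Lam_unbounded: "\<exists>t\<ge>0. M \<le> La t"
proof -
  obtain k where k: "M * exp d < (\<Sum>i\<le>k. Yj i \<omega>)"
    using good unfolding good_def by blast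
  define t where "t = Tj k \<omega> + 1"
  have t0: "0 \<le> t" unfolding t_def using Tj_pos[of k] by simp
  define g where "g s = (\<Sum>i\<le>k. (Yj i \<omega> * exp (- d)) * indicator {Tj i \<omega>..Tj i \<omega> + 1} s)" for s
  have int_i: "integrable lborel (\<lambda>s. (Yj i \<omega> * exp (- d)) * indicator {Tj i \<omega>..Tj i \<omega> + 1} s :: real)" for i
    by (intro integrable_mult_right) (simp add: integrable_indicator_iff emeasure_lborel_Icc_eq)
  have int_g: "integrable lborel g" unfolding g_def using int_i by (intro Bochner_Integration.integrable_sum) auto
  have ig: "integral\<^sup>L lborel g = (\<Sum>i\<le>k. Yj i \<omega> * exp (- d))"
    unfolding g_def using int_i
    by (subst Bochner_Integration.integral_sum) (auto simp: measure_lborel_Icc)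
  have sub: "{Tj i \<omega>..Tj i \<omega> + 1} \<subseteq> {0..t}" if "i \<le> k" for i
    using Tj_pos[of i] Tj_mono[OF that] unfolding t_def by auto
  have geq: "indicator {0..t} s * g s = g s" for s
  proof (cases "s \<in> {0..t}")
    case False
    then have "indicator {Tj i \<omega>..Tj i \<omega> + 1} s = (0::real)" if "i \<le> k" for i
      using sub[OF that] by (auto split: split_indicator)
    then show ?thesis unfolding g_def by (simp add: False)
  qed simp
  have gle: "g s \<le> la s" for s
  proof -
    define A where "A = {i\<in>{..k}. Tj i \<omega> \<le> s \<and> s \<le> Tj i \<omega> + 1}"
    have "g s = (\<Sum>i\<le>k. if Tj i \<omega> \<le> s \<and> s \<le> Tj i \<omega> + 1 then Yj i \<omega> * exp (- d) else 0)"
      unfolding g_def by (intro sum.cong) (auto split: split_indicator)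
    also have "\<dots> = (\<Sum>i\<in>A. Yj i \<omega> * exp (- d))"
      unfolding A_def by (rule sum.inter_filter[symmetric]) simp
    also have "\<dots> \<le> (\<Sum>i\<in>A. Yj i \<omega> * exp (- d * (s - Tj i \<omega>)))"
      using Y_pos d by (intro sum_mono mult_left_mono) (auto simp: A_def less_imp_le)
    also have "\<dots> \<le> (\<Sum>i\<in>{j. Tj j \<omega> \<le> s}. Yj i \<omega> * exp (- d * (s - Tj i \<omega>)))"
      using Y_pos by (intro sum_mono2 Tj_fin) (auto simp: A_def less_imp_le)
    also have "\<dots> \<le> la s"
      using lb l0 unfolding lam_def by simp
    finally show ?thesis .
  qed
  have "integral\<^sup>L lborel g = integral\<^sup>L lborel (\<lambda>s. indicator {0..t} s * g s)"
    by (simp add: geq)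
  also have "\<dots> \<le> La t"
    unfolding Lam_eq
  proof (rule integral_mono)
    have "(\<lambda>s. indicator {0..t} s * g s) = g" using geq by (rule ext)
    then show "integrable lborel (\<lambda>s. indicator {0..t} s * g s)" using int_g by simp
    show "integrable lborel (\<lambda>s. indicator {0..t} s * la s)" using lam_int unfolding set_integrable_def by simp
  qed (auto intro: gle mult_left_mono simp: indicator_def)
  finally have "integral\<^sup>L lborel g \<le> La t" .
  moreover have "M < (\<Sum>i\<le>k. Yj i \<omega> * exp (- d))"
  proof -
    have "M * exp d * exp (- d) < (\<Sum>i\<le>k. Yj i \<omega>) * exp (- d)"
      using k by (intro mult_strict_right_mono) auto
    moreover have "M * exp d * exp (- d) = M" by (simp add: exp_minus_inverse)
    ultimately show ?thesis by (simp add: sum_distrib_right)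
  qed
  ultimately show ?thesis using t0 ig by (intro exI[of _ t]) auto
qed

abbreviation "ta j \<equiv> tau lb d l0 j \<omega>"
definition "Sj j = {t. 0 \<le> t \<and> Gam j \<omega> \<le> La t}"

lemma Sj_ne: "Sj j \<noteq> {}"
  using Lam_unbounded[of "Gam j \<omega>"] unfolding Sj_def by auto

lemma Sj_bdd: "bdd_below (Sj j)"
  unfolding Sj_def by (rule bdd_belowI[of _ 0]) auto

lemma tau_eq: "ta j = Inf (Sj j)"
  unfolding tau_def Sj_def ..

lemma tau_le: "0 \<le> t \<Longrightarrow> Gam j \<omega> \<le> La t \<Longrightarrow> ta j \<le> t"
  unfolding tau_eq by (rule cInf_lower[OF _ Sj_bdd]) (simp add: Sj_def)

lemma tau_le_imp: "ta j \<le> t \<Longrightarrow> Gam j \<omega> \<le> La (t + 1)"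
proof -
  assume "ta j \<le> t"
  then have "Inf (Sj j) < t + 1" unfolding tau_eq by simp
  then obtain s where "s \<in> Sj j" "s < t + 1"
    using cInf_less_iff[OF Sj_ne Sj_bdd] by blast
  then show ?thesis using Lam_mono[of s "t + 1"] unfolding Sj_def by auto
qed

lemma tau_pos: "\<exists>\<delta>>0. \<forall>j. \<delta> \<le> ta j"
proof -
  define \<delta> where "\<delta> = min 1 (Gam 0 \<omega> / (Bd 1 + 1))"
  have B0: "0 \<le> Bd 1" by (rule Bd_nonneg)
  have g0: "0 < Gam 0 \<omega>" by (rule Gam0_pos)
  have dpos: "0 < \<delta>" unfolding \<delta>_def using B0 g0 by simp
  have "\<delta> \<le> ta j" for j
    unfolding tau_eq
  proof (rule cInf_greatest[OF Sj_ne])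
    fix s assume s: "s \<in> Sj j"
    show "\<delta> \<le> s"
    proof (rule ccontr)
      assume "\<not> \<delta> \<le> s"
      then have s1: "s < \<delta>" by simp
      have s0: "0 \<le> s" using s unfolding Sj_def by simp
      have "La s \<le> Bd 1 * s" using s0 s1 unfolding \<delta>_def by (intro Lam_upper) auto
      also have "\<dots> \<le> Bd 1 * \<delta>" using s1 B0 by (intro mult_left_mono) auto
      also have "\<dots> \<le> Bd 1 * (Gam 0 \<omega> / (Bd 1 + 1))" using B0 unfolding \<delta>_def by (intro mult_left_mono) auto
      also have "\<dots> < Gam 0 \<omega>" using B0 g0 by (simp add: field_simps)
      also have "\<dots> \<le> Gam j \<omega>" by (rule Gam_ge0)
      finally show False using s unfolding Sj_def by simp
    qed
  qed
  then show ?thesis using dpos by blast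
qed

lemma claims_fin: "finite {j. ta j \<le> t}"
  by (rule finite_subset[OF _ Gam_fin[of "La (t + 1)"]]) (auto intro: tau_le_imp)

definition "Cl t = (\<Sum>j\<in>{j. ta j \<le> t}. Uj j \<omega>)"

lemma Cl_nonneg: "0 \<le> Cl t"
  unfolding Cl_def using U_pos by (intro sum_nonneg) (simp add: less_imp_le)

lemma Cl_mono: "t \<le> t' \<Longrightarrow> Cl t \<le> Cl t'"
  unfolding Cl_def using U_pos by (intro sum_mono2 claims_fin) (auto simp: less_imp_le)

lemma Cl_zero: "\<exists>\<delta>>0. \<forall>t<\<delta>. Cl t = 0"
proof -
  obtain \<delta> where "\<delta> > 0" "\<forall>j. \<delta> \<le> ta j" using tau_pos by blast
  then have "\<forall>t<\<delta>. {j. ta j \<le> t} = {}"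
  proof (intro allI impI)
    fix t assume "\<forall>j. \<delta> \<le> ta j" "t < \<delta>"
    then have "\<forall>j. \<not> ta j \<le> t" by (metis not_less order_less_le_trans)
    then show "{j. ta j \<le> t} = {}" by simp
  qed
  then show ?thesis using \<open>\<delta> > 0\<close> unfolding Cl_def by auto
qed

lemma Cl_lower: "0 \<le> e \<Longrightarrow> Gam m \<omega> \<le> La e \<Longrightarrow> (\<Sum>j\<le>m. Uj j \<omega>) \<le> Cl e"
proof -
  assume e: "0 \<le> e" "Gam m \<omega> \<le> La e"
  have "{..m} \<subseteq> {j. ta j \<le> e}"
  proof
    fix j assume "j \<in> {..m}"
    then have "Gam j \<omega> \<le> Gam m \<omega>" by (intro Gam_mono) simp
    then show "j \<in> {j. ta j \<le> e}" using e by (auto intro!: tau_le)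
  qed
  then show ?thesis unfolding Cl_def using U_pos
    by (intro sum_mono2 claims_fin) (auto simp: less_imp_le)
qed

lemma surplus_eq: "surplus p lb d l0 x t \<omega> = x + p * t - Cl t"
  unfolding surplus_def Cl_def ..

end


lemma exp_tail:
  fixes q s :: real assumes q: "0 < q" and s: "0 \<le> s"
  shows "ennreal (exp (- q * s)) \<le> (\<integral>\<^sup>+ r. ennreal (exponential_density q r) * indicator {s..} r \<partial>lborel)"
proof -
  define D where "D = density lborel (exponential_density q)"
  interpret D: prob_space D unfolding D_def using q by (rule prob_space_exponential_density)
  have sD[simp]: "sets D = sets borel" unfolding D_def by simp
  have "emeasure D {..s} + emeasure D {s<..} = emeasure D ({..s} \<union> {s<..})"
    by (rule plus_emeasure) auto
  also have "{..s} \<union> {s<..} = space D" unfolding D_def by auto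
  also have "emeasure D (space D) = 1" by (rule D.emeasure_space_1)
  finally have eq: "emeasure D {..s} + emeasure D {s<..} = 1" .
  have "emeasure D {..s} = erlang_CDF 0 q s" unfolding D_def using q by (rule emeasure_erlang_density)
  also have "\<dots> = 1 - exp (- q * s)" using s by (simp add: erlang_CDF_def)
  finally have "ennreal (1 - exp (- q * s)) + emeasure D {s<..} = ennreal (1 - exp (- q * s)) + ennreal (exp (- q * s))"
    using eq q s by (simp add: ennreal_plus[symmetric] del: ennreal_plus)
  then have "ennreal (exp (- q * s)) = emeasure D {s<..}"
    by (simp add: ennreal_add_left_cancel)
  also have "emeasure D {s<..} \<le> emeasure D {s..}" by (intro emeasure_mono) auto
  also have "emeasure D {s..} = (\<integral>\<^sup>+ r. ennreal (exponential_density q r) * indicator {s..} r \<partial>lborel)"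
    unfolding D_def by (subst emeasure_density) auto
  finally show ?thesis by simp
qed

lemma tonelli_bound:
  fixes F h :: "real \<Rightarrow> real" and A :: "real set"
  assumes mono: "\<And>x y. x \<le> y \<Longrightarrow> F x \<le> F y" and rc: "\<And>a. continuous (at_right a) F"
    and q: "0 < q" and A[measurable]: "A \<in> sets borel" and A0: "A \<subseteq> {0..}"
    and h: "\<And>r. 0 \<le> r \<Longrightarrow> emeasure (interval_measure F) (A \<inter> {..r}) \<le> ennreal (h r)"
  shows "(\<integral>\<^sup>+ s. indicator A s * ennreal (exp (- q * s)) \<partial>interval_measure F)
      \<le> (\<integral>\<^sup>+ r. ennreal (exponential_density q r) * ennreal (h r) \<partial>lborel)"
proof -
  let ?\<mu> = "interval_measure F"
  interpret \<mu>: sigma_finite_measure ?\<mu> by (rule sigma_finite_interval_measure[OF mono rc])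
  interpret pair_sigma_finite ?\<mu> lborel by unfold_locales
  have "(\<integral>\<^sup>+ s. indicator A s * ennreal (exp (- q * s)) \<partial>?\<mu>)
      \<le> (\<integral>\<^sup>+ s. (\<integral>\<^sup>+ r. indicator A s * (ennreal (exponential_density q r) * indicator {s..} r) \<partial>lborel) \<partial>?\<mu>)"
  proof (intro nn_integral_mono)
    fix s
    show "indicator A s * ennreal (exp (- q * s)) \<le> (\<integral>\<^sup>+ r. indicator A s * (ennreal (exponential_density q r) * indicator {s..} r) \<partial>lborel)"
    proof (cases "s \<in> A")
      case True
      then have "0 \<le> s" using A0 by auto
      then show ?thesis using True exp_tail[OF q] by (subst nn_integral_cmult) auto
    qed simp
  qed
  also have "\<dots> = (\<integral>\<^sup>+ r. (\<integral>\<^sup>+ s. indicator A s * (ennreal (exponential_density q r) * indicator {s..} r) \<partial>?\<mu>) \<partial>lborel)"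
  proof (rule Fubini'[symmetric])
    have [measurable]: "Measurable.pred (borel \<Otimes>\<^sub>M borel) (\<lambda>x::real\<times>real. snd x \<in> {fst x..})"
      by (simp add: atLeast_iff) measurable
    show "case_prod (\<lambda>s r. indicator A s * (ennreal (exponential_density q r) * indicator {s..} r)) \<in> borel_measurable (?\<mu> \<Otimes>\<^sub>M lborel)"
      by measurable
  qed
  also have "\<dots> = (\<integral>\<^sup>+ r. ennreal (exponential_density q r) * emeasure ?\<mu> (A \<inter> {..r}) \<partial>lborel)"
  proof (intro nn_integral_cong)
    fix r
    have "(\<integral>\<^sup>+ s. indicator A s * (ennreal (exponential_density q r) * indicator {s..} r) \<partial>?\<mu>)
        = (\<integral>\<^sup>+ s. ennreal (exponential_density q r) * indicator (A \<inter> {..r}) s \<partial>?\<mu>)"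
      by (intro nn_integral_cong) (auto split: split_indicator)
    also have "\<dots> = ennreal (exponential_density q r) * emeasure ?\<mu> (A \<inter> {..r})"
      by (subst nn_integral_cmult_indicator) auto
    finally show "(\<integral>\<^sup>+ s. indicator A s * (ennreal (exponential_density q r) * indicator {s..} r) \<partial>?\<mu>)
        = ennreal (exponential_density q r) * emeasure ?\<mu> (A \<inter> {..r})" .
  qed
  also have "\<dots> \<le> (\<integral>\<^sup>+ r. ennreal (exponential_density q r) * ennreal (h r) \<partial>lborel)"
  proof (intro nn_integral_mono)
    fix r
    show "ennreal (exponential_density q r) * emeasure ?\<mu> (A \<inter> {..r}) \<le> ennreal (exponential_density q r) * ennreal (h r)"
    proof (cases "0 \<le> r")
      case True
      then show ?thesis using h[OF True] by (intro mult_left_mono) auto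
    qed (simp add: exponential_density_def)
  qed
  finally show ?thesis .
qed

lemma mu_bound:
  fixes F :: "real \<Rightarrow> real" and \<tau> :: ereal
  assumes mono: "\<And>x y. x \<le> y \<Longrightarrow> F x \<le> F y" and rc: "\<And>a. continuous (at_right a) F"
    and neg: "\<And>s. s < 0 \<Longrightarrow> F s = 0" and r: "0 \<le> r"
    and c: "\<And>t. 0 \<le> t \<Longrightarrow> t \<le> r \<Longrightarrow> ereal t < \<tau> \<Longrightarrow> F t \<le> c" and c0: "0 \<le> c"
  shows "emeasure (interval_measure F) ({s. 0 \<le> s \<and> ereal s < \<tau>} \<inter> {..r}) \<le> ennreal c"
proof -
  let ?\<mu> = "interval_measure F"
  have Fm1: "F (-1) = 0" using neg by simp
  have Ioc: "emeasure ?\<mu> {-1<..b} \<le> ennreal c" if "\<And>t. 0 \<le> t \<Longrightarrow> t \<le> b \<Longrightarrow> F t \<le> c" for b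
  proof (cases "-1 \<le> b")
    case True
    have "F b \<le> c"
    proof (cases "b < 0")
      case True then show ?thesis using neg c0 by simp
    next
      case False then show ?thesis using that by simp
    qed
    then show ?thesis using True by (simp add: emeasure_interval_measure_Ioc[OF True mono rc] Fm1 ennreal_leI)
  qed (simp add: emeasure_interval_measure_Ioc_eq[OF mono rc])
  show ?thesis
  proof (cases "ereal r < \<tau>")
    case True
    have "emeasure ?\<mu> ({s. 0 \<le> s \<and> ereal s < \<tau>} \<inter> {..r}) \<le> emeasure ?\<mu> {-1<..r}"
      by (intro emeasure_mono) auto
    also have "\<dots> \<le> ennreal c"
    proof (rule Ioc)
      fix t assume "0 \<le> t" "t \<le> r"
      moreover then have "ereal t < \<tau>" using True by (meson ereal_less_eq(3) order_le_less_trans)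
      ultimately show "F t \<le> c" by (rule c)
    qed
    finally show ?thesis .
  next
    case False
    then have tr: "\<tau> \<le> ereal r" by simp
    show ?thesis
    proof (cases "\<tau> \<le> 0")
      case True
      have e: "{s. 0 \<le> s \<and> ereal s < \<tau>} = {}"
      proof (intro equalityI subsetI)
        fix s assume "s \<in> {s. 0 \<le> s \<and> ereal s < \<tau>}"
        then have "ereal 0 \<le> ereal s" "ereal s < \<tau>" by auto
        then have "ereal 0 < \<tau>" by (rule order_le_less_trans)
        then show "s \<in> {}" using True by (simp add: zero_ereal_def)
      qed simp
      show ?thesis unfolding e by simp
    next
      case False
      then obtain T where T: "\<tau> = ereal T" "0 < T" "T \<le> r" using tr
        by (cases \<tau>) auto
      define B where "B n = {-1<..T - 1 / Suc n}" for n :: nat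
      have "{s. 0 \<le> s \<and> ereal s < \<tau>} \<inter> {..r} \<subseteq> (\<Union>n. B n)"
      proof
        fix s assume "s \<in> {s. 0 \<le> s \<and> ereal s < \<tau>} \<inter> {..r}"
        then have s: "0 \<le> s" "s < T" using T by auto
        then obtain n where "1 / Suc n < T - s"
          by (metis diff_gt_0_iff_gt nat_approx_posE)
        then have "s \<in> B n" using s unfolding B_def by auto
        then show "s \<in> (\<Union>n. B n)" by blast
      qed
      then have "emeasure ?\<mu> ({s. 0 \<le> s \<and> ereal s < \<tau>} \<inter> {..r}) \<le> emeasure ?\<mu> (\<Union>n. B n)"
        by (intro emeasure_mono) (auto simp: B_def)
      also have "\<dots> = (SUP n. emeasure ?\<mu> (B n))"
      proof (rule SUP_emeasure_incseq[symmetric])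
        show "range B \<subseteq> sets ?\<mu>" unfolding B_def by auto
        show "incseq B" unfolding B_def incseq_def
        proof (intro allI impI subsetI)
          fix m n :: nat and x assume "m \<le> n" "x \<in> {-1<..T - 1 / Suc m}"
          moreover have "1 / real (Suc n) \<le> 1 / Suc m" using \<open>m \<le> n\<close> by (simp add: frac_le)
          ultimately show "x \<in> {-1<..T - 1 / Suc n}" by auto
        qed
      qed
      also have "\<dots> \<le> ennreal c"
      proof (rule SUP_least)
        fix n
        show "emeasure ?\<mu> (B n) \<le> ennreal c" unfolding B_def
        proof (rule Ioc)
          fix t assume t: "0 \<le> t" "t \<le> T - 1 / Suc n"
          then have "t < T" by (smt (verit) of_nat_0_less_iff zero_less_Suc divide_pos_pos)
          then show "F t \<le> c" using t T by (intro c) auto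
        qed
      qed
      finally show ?thesis .
    qed
  qed
qed



lemma Fext_mono:
  fixes f :: "real \<Rightarrow> real"
  assumes "mono_on {0..} f" "0 \<le> f 0" "x \<le> y"
  shows "(if x < 0 then 0 else f x) \<le> (if y < 0 then 0 else (f y :: real))"
proof -
  have a: "0 \<le> y \<Longrightarrow> f 0 \<le> f y" using mono_onD[OF assms(1), of 0 y] by auto
  have b: "0 \<le> x \<Longrightarrow> f x \<le> f y" using mono_onD[OF assms(1), of x y] assms(3) by simp
  show ?thesis using a b assms(2,3) by auto
qed

lemma Fext_rc:
  fixes f :: "real \<Rightarrow> real"
  assumes "\<forall>t\<ge>0. continuous (at_right t) f"
  shows "continuous (at_right a) (\<lambda>s. if s < 0 then 0 else (f s :: real))"
proof (cases "a < 0")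
  case True
  have ev: "\<forall>\<^sub>F s in at_right a. (if s < 0 then 0 else f s) = 0"
  proof (subst eventually_at_right[of a 0, OF True])
    show "\<exists>b>a. \<forall>y>a. y < b \<longrightarrow> (if y < 0 then 0 else f y) = 0"
      using True by (intro exI[of _ 0]) auto
  qed
  have "((\<lambda>s. 0::real) \<longlongrightarrow> 0) (at_right a)" by (rule tendsto_const)
  then have "((\<lambda>s. if s < 0 then 0 else f s) \<longlongrightarrow> 0) (at_right a)"
    using tendsto_cong[OF ev] by blast
  then show ?thesis unfolding continuous_within using True by simp
next
  case False
  have ev: "\<forall>\<^sub>F s in at_right a. (if s < 0 then 0 else f s) = f s"
  proof (subst eventually_at_right[of a "a + 1"])
    show "a < a + 1" by simp
    show "\<exists>b>a. \<forall>y>a. y < b \<longrightarrow> (if y < 0 then 0 else f y) = f y"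
      using False by (intro exI[of _ "a + 1"]) auto
  qed
  have "(f \<longlongrightarrow> f a) (at_right a)" using assms False by (auto simp: continuous_within)
  then have "((\<lambda>s. if s < 0 then 0 else f s) \<longlongrightarrow> f a) (at_right a)"
    using tendsto_cong[OF ev] by blast
  then show ?thesis unfolding continuous_within using False by simp
qed

lemma moments:
  fixes q :: real assumes q: "0 < q"
  shows "(\<integral>\<^sup>+ r. ennreal (exponential_density q r * r ^ i) \<partial>lborel) = fact i / q ^ i"
  using nn_integral_erlang_ith_moment[OF q, of 0 i] by simp

lemma integral_h:
  fixes q a b c :: real assumes q: "0 < q" and abc: "0 \<le> a" "0 \<le> b" "0 \<le> c"
  shows "(\<integral>\<^sup>+ r. ennreal (exponential_density q r) * ennreal (a + b * r^2 + c * r) \<partial>lborel)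
     = ennreal a + ennreal b * ennreal (2 / q^2) + ennreal c * ennreal (1 / q)"
proof -
  let ?e = "exponential_density q"
  have eq: "ennreal (?e r) * ennreal (a + b * r^2 + c * r) =
      ennreal a * ennreal (?e r * r ^ 0) + ennreal b * ennreal (?e r * r ^ 2)
      + ennreal c * ennreal (?e r * r ^ 1)" for r
  proof (cases "0 \<le> r")
    case True
    have ed: "0 \<le> ?e r" using q by (simp add: exponential_density_def)
    have "ennreal (?e r) * ennreal (a + b * r^2 + c * r) = ennreal (?e r * (a + b * r^2 + c * r))"
      using ed by (rule ennreal_mult'[symmetric])
    also have "?e r * (a + b * r^2 + c * r) = a * (?e r * r ^ 0) + b * (?e r * r ^ 2) + c * (?e r * r ^ 1)"
      by (simp add: algebra_simps)
    also have "ennreal \<dots> = ennreal (a * (?e r * r ^ 0)) + ennreal (b * (?e r * r ^ 2)) + ennreal (c * (?e r * r ^ 1))"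
      using ed True abc by (simp add: ennreal_plus)
    also have "\<dots> = ennreal a * ennreal (?e r * r ^ 0) + ennreal b * ennreal (?e r * r ^ 2)
      + ennreal c * ennreal (?e r * r ^ 1)"
      using ed True abc by (simp add: ennreal_mult)
    finally show ?thesis .
  qed (simp add: exponential_density_def)
  have m[measurable]: "(\<lambda>r. ennreal (?e r * r ^ i)) \<in> borel_measurable lborel" for i
    by (simp add: exponential_density_def) measurable
  have "(\<integral>\<^sup>+ r. ennreal (?e r) * ennreal (a + b * r^2 + c * r) \<partial>lborel) =
     (\<integral>\<^sup>+ r. ennreal a * ennreal (?e r * r ^ 0) + ennreal b * ennreal (?e r * r ^ 2) \<partial>lborel)
      + (\<integral>\<^sup>+ r. ennreal c * ennreal (?e r * r ^ 1) \<partial>lborel)"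
    unfolding eq by (rule nn_integral_add) auto
  also have "(\<integral>\<^sup>+ r. ennreal a * ennreal (?e r * r ^ 0) + ennreal b * ennreal (?e r * r ^ 2) \<partial>lborel) =
      (\<integral>\<^sup>+ r. ennreal a * ennreal (?e r * r ^ 0) \<partial>lborel) + (\<integral>\<^sup>+ r. ennreal b * ennreal (?e r * r ^ 2) \<partial>lborel)"
    by (rule nn_integral_add) auto
  also have "(\<integral>\<^sup>+ r. ennreal a * ennreal (?e r * r ^ 0) \<partial>lborel) = ennreal a * ennreal 1"
    using moments[OF q, of 0] by (subst nn_integral_cmult) auto
  also have "(\<integral>\<^sup>+ r. ennreal b * ennreal (?e r * r ^ 2) \<partial>lborel) = ennreal b * ennreal (2 / q^2)"
  proof -
    have "(\<integral>\<^sup>+ r. ennreal (?e r * r ^ 2) \<partial>lborel) = ennreal (2 / q^2)"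
      using moments[OF q, of 2] q by (simp add: divide_ennreal[symmetric] ennreal_power)
    then show ?thesis by (subst nn_integral_cmult) auto
  qed
  also have "(\<integral>\<^sup>+ r. ennreal c * ennreal (?e r * r ^ 1) \<partial>lborel) = ennreal c * ennreal (1 / q)"
  proof -
    have "(\<integral>\<^sup>+ r. ennreal (?e r * r ^ 1) \<partial>lborel) = ennreal (1 / q)"
      using moments[OF q, of 1] q by (simp add: divide_ennreal[symmetric])
    then show ?thesis by (subst nn_integral_cmult) auto
  qed
  finally show ?thesis by simp
qed

context path begin

lemma surplus_bound:
  fixes p x \<epsilon> R r t :: real and m :: nat and bb :: real
  assumes p: "0 < p" and x: "0 \<le> x" and e: "0 < \<epsilon>" and R: "0 < R"
    and t: "0 \<le> t" "t \<le> r"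
    and bb: "bb = (if Gam m \<omega> \<le> (l0 - lb) * exp (- d * \<epsilon>) * \<epsilon> \<and> p * R \<le> (\<Sum>j\<le>m. Uj j \<omega>) then 0 else 1)"
  shows "surplus p lb d l0 x t \<omega> \<le> x + p * \<epsilon> + p / R * r ^ 2 + p * bb * r"
proof -
  have C0: "0 \<le> Cl t" by (rule Cl_nonneg)
  have r0: "0 \<le> r" using t by simp
  have rsq: "0 \<le> p / R * r ^ 2" using p R by simp
  show ?thesis
  proof (cases "Gam m \<omega> \<le> (l0 - lb) * exp (- d * \<epsilon>) * \<epsilon> \<and> p * R \<le> (\<Sum>j\<le>m. Uj j \<omega>)")
    case False
    then have b1: "bb = 1" using bb by simp
    have "p * t \<le> p * r" using p t by simp
    moreover have "0 \<le> p * \<epsilon>" using p e by simp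
    ultimately show ?thesis unfolding surplus_eq b1 mult_1_right using C0 rsq by linarith
  next
    case True
    then have bb0: "bb = 0" using bb by simp
    show ?thesis
    proof (cases "t < \<epsilon>")
      case True
      then have "p * t \<le> p * \<epsilon>" using p by simp
      then show ?thesis unfolding surplus_eq bb0 using C0 rsq by linarith
    next
      case False
      have "Gam m \<omega> \<le> La \<epsilon>" using True Lam_lower[of \<epsilon>] e by simp
      then have "(\<Sum>j\<le>m. Uj j \<omega>) \<le> Cl \<epsilon>" using e by (intro Cl_lower) auto
      moreover have "Cl \<epsilon> \<le> Cl t" using False by (intro Cl_mono) simp
      ultimately have CR: "p * R \<le> Cl t" using True by simp
      show ?thesis
      proof (cases "t \<le> R")
        case True
        then have "p * t \<le> p * R" using p by simp
        moreover have "0 \<le> p * \<epsilon>" using p e by simp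
        ultimately show ?thesis unfolding surplus_eq bb0 using CR rsq by simp
      next
        case False
        have "t * R \<le> r * r" using False t R by (intro mult_mono) auto
        then have "p * (t * R) \<le> p * (r * r)" using p by simp
        then have "p * t \<le> p / R * r ^ 2" using R by (simp add: field_simps power2_eq_square)
        moreover have "0 \<le> p * \<epsilon>" using p e by simp
        ultimately show ?thesis unfolding surplus_eq bb0 using C0 by linarith
      qed
    qed
  qed
qed

lemma pathwise_upper:
  fixes p q x \<epsilon> R :: real and L :: "real \<Rightarrow> omega \<Rightarrow> real" and m :: nat and bb :: real
  assumes p: "0 < p" and q: "0 < q" and x: "0 \<le> x" and e: "0 < \<epsilon>" and R: "0 < R"
    and Lmono: "mono_on {0..} (\<lambda>t. L t \<omega>)" and Lrc: "\<forall>t\<ge>0. continuous (at_right t) (\<lambda>s. L s \<omega>)"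
    and L0: "0 \<le> L 0 \<omega>"
    and Ls: "\<forall>t\<ge>0. ereal t < ruin_time p lb d l0 x L \<omega> \<longrightarrow> L t \<omega> \<le> surplus p lb d l0 x t \<omega>"
    and bb: "bb = (if Gam m \<omega> \<le> (l0 - lb) * exp (- d * \<epsilon>) * \<epsilon> \<and> p * R \<le> (\<Sum>j\<le>m. Uj j \<omega>) then 0 else 1)"
  shows "(\<integral>\<^sup>+ s. indicator {s. 0 \<le> s \<and> ereal s < ruin_time p lb d l0 x L \<omega>} s * ennreal (exp (- q * s))
      \<partial>interval_measure (\<lambda>s. if s < 0 then 0 else L s \<omega>))
    \<le> ennreal (x + p * \<epsilon>) + ennreal (p / R) * ennreal (2 / q^2) + ennreal (p * bb) * ennreal (1 / q)"
proof -
  define F where "F s = (if s < 0 then 0 else L s \<omega>)" for s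
  define \<tau> where "\<tau> = ruin_time p lb d l0 x L \<omega>"
  define A where "A = {s. 0 \<le> s \<and> ereal s < \<tau>}"
  have Fmono: "\<And>x y. x \<le> y \<Longrightarrow> F x \<le> F y" unfolding F_def by (rule Fext_mono[OF Lmono L0])
  have Frc: "\<And>a. continuous (at_right a) F" unfolding F_def by (rule Fext_rc[OF Lrc])
  have bb0: "0 \<le> bb" using bb by simp
  have A[measurable]: "A \<in> sets borel" unfolding A_def by measurable
  have "(\<integral>\<^sup>+ s. indicator A s * ennreal (exp (- q * s)) \<partial>interval_measure F)
      \<le> (\<integral>\<^sup>+ r. ennreal (exponential_density q r) * ennreal (x + p * \<epsilon> + p / R * r ^ 2 + p * bb * r) \<partial>lborel)"
  proof (rule tonelli_bound[OF Fmono Frc q A])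
    show "A \<subseteq> {0..}" unfolding A_def by auto
    fix r :: real assume r: "0 \<le> r"
    have "emeasure (interval_measure F) ({s. 0 \<le> s \<and> ereal s < \<tau>} \<inter> {..r}) \<le> ennreal (x + p * \<epsilon> + p / R * r ^ 2 + p * bb * r)"
    proof (rule mu_bound[OF Fmono Frc _ r])
      show "\<And>s. s < 0 \<Longrightarrow> F s = 0" unfolding F_def by simp
      show "0 \<le> x + p * \<epsilon> + p / R * r ^ 2 + p * bb * r" using x p e R r bb0 by simp
      fix t assume t: "0 \<le> t" "t \<le> r" "ereal t < \<tau>"
      have "F t = L t \<omega>" unfolding F_def using t by simp
      also have "\<dots> \<le> surplus p lb d l0 x t \<omega>" using Ls t unfolding \<tau>_def by simp
      also have "\<dots> \<le> x + p * \<epsilon> + p / R * r ^ 2 + p * bb * r"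
        by (rule surplus_bound[OF p x e R t(1,2) bb])
      finally show "F t \<le> x + p * \<epsilon> + p / R * r ^ 2 + p * bb * r" .
    qed
    then show "emeasure (interval_measure F) (A \<inter> {..r}) \<le> ennreal (x + p * \<epsilon> + p / R * r ^ 2 + p * bb * r)"
      unfolding A_def .
  qed
  also have "\<dots> = ennreal (x + p * \<epsilon>) + ennreal (p / R) * ennreal (2 / q^2) + ennreal (p * bb) * ennreal (1 / q)"
    by (rule integral_h[OF q]) (use x p e R bb0 in auto)
  finally show ?thesis unfolding F_def A_def \<tau>_def .
qed

end



context model begin

lemma c1_bound: "(\<integral>\<^sup>+ z. ennreal (exp (fst (snd z) / 2)) \<partial>B) \<le> 2"
proof -
  have "(\<integral>\<^sup>+ z. ennreal (exp (fst (snd z) / 2)) \<partial>B) = (\<integral>\<^sup>+ w. ennreal (exp (fst w / 2)) \<partial>(E1 \<Otimes>\<^sub>M FU))"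
    unfolding base_law_def
    by (rule nn_integral_snd_pair[where g="\<lambda>w. ennreal (exp (fst w / 2))"])
       (use prob_space_pair[OF Eb_prob FY(1)] sf in auto)
  also have "\<dots> = (\<integral>\<^sup>+ y. ennreal (exp (y / 2)) \<partial>E1)"
    by (rule nn_integral_fst_pair[where g="\<lambda>y. ennreal (exp (y / 2))"]) (use FU sf in auto)
  also have "\<dots> = (\<integral>\<^sup>+ y. ennreal (exponential_density 1 y) * ennreal (exp (y / 2)) \<partial>lborel)"
    by (rule nn_integral_density) auto
  also have "\<dots> = (\<integral>\<^sup>+ y. 2 * ennreal (exponential_density (1/2) y * y ^ 0) \<partial>lborel)"
  proof (intro nn_integral_cong)
    fix y :: real
    show "ennreal (exponential_density 1 y) * ennreal (exp (y / 2)) = 2 * ennreal (exponential_density (1/2) y * y ^ 0)"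
    proof (cases "y < 0")
      case False
      have "exp (- y) * exp (y / 2) = exp (- y / 2)" by (simp add: exp_add[symmetric])
      then have "exponential_density 1 y * exp (y / 2) = 2 * (exponential_density (1/2) y * y ^ 0)"
        using False by (simp add: exponential_density_def)
      then show ?thesis
        by (simp add: ennreal_mult'[symmetric] ennreal_mult exponential_density_nonneg)
    qed (simp add: exponential_density_def)
  qed
  also have "\<dots> = 2 * ennreal 1"
    using moments[of "1/2" 0] by (subst nn_integral_cmult) auto
  finally show ?thesis by simp
qed

lemma E1_bound:
  fixes K :: real
  shows "emeasure S {\<omega>. K < Gam m \<omega>} \<le> ennreal (exp (- K / 2)) * 2 ^ Suc m"
proof -
  define f where "f z = - fst (snd z) / 2" for z :: "(real \<times> real) \<times> (real \<times> real)"
  have f[measurable]: "f \<in> borel_measurable B" unfolding f_def by measurable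
  have sub: "{\<omega>. K < Gam m \<omega>} \<subseteq> {\<omega>. (\<Sum>i<Suc m. f (\<omega> i)) \<le> - K / 2}"
  proof
    fix \<omega> assume "\<omega> \<in> {\<omega>. K < Gam m \<omega>}"
    then have "K < (\<Sum>i\<le>m. fst (snd (\<omega> i)))" unfolding Gam_def by simp
    moreover have "(\<Sum>i<Suc m. f (\<omega> i)) = - (\<Sum>i\<le>m. fst (snd (\<omega> i))) / 2"
      unfolding f_def lessThan_Suc_atMost by (simp add: sum_negf sum_divide_distrib)
    ultimately show "\<omega> \<in> {\<omega>. (\<Sum>i<Suc m. f (\<omega> i)) \<le> - K / 2}" by simp
  qed
  have meas: "{\<omega>. (\<Sum>i<Suc m. f (\<omega> i)) \<le> - K / 2} \<in> sets S"
  proof -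
    have "{\<omega>\<in>space S. (\<Sum>i<Suc m. f (\<omega> i)) \<le> - K / 2} \<in> sets S" by measurable
    then show ?thesis by (simp add: space_S)
  qed
  have "emeasure S {\<omega>. K < Gam m \<omega>} \<le> emeasure S {\<omega>. (\<Sum>i<Suc m. f (\<omega> i)) \<le> - K / 2}"
    by (rule emeasure_mono[OF sub meas])
  also have "\<dots> \<le> ennreal (exp (- K / 2)) * (\<integral>\<^sup>+ z. ennreal (exp (- f z)) \<partial>B) ^ Suc m"
    by (rule chernoff[OF f])
  also have "\<dots> \<le> ennreal (exp (- K / 2)) * 2 ^ Suc m"
    using c1_bound unfolding f_def by (intro mult_left_mono power_mono) auto
  finally show ?thesis .
qed

definition "c2 = (\<integral>\<^sup>+ z. ennreal (exp (- snd (snd z))) \<partial>B)"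

lemma c2_lt1: "c2 < 1"
  unfolding c2_def by (rule exp_neg_lt1[OF meas_c4 AE_B_pos(4)])

lemma E2_bound:
  fixes K :: real
  shows "emeasure S {\<omega>. (\<Sum>j\<le>m. Uj j \<omega>) < K} \<le> ennreal (exp K) * c2 ^ Suc m"
proof -
  have sub: "{\<omega>. (\<Sum>j\<le>m. Uj j \<omega>) < K} \<subseteq> {\<omega>. (\<Sum>i<Suc m. snd (snd (\<omega> i))) \<le> K}"
    unfolding Uj_def lessThan_Suc_atMost by auto
  have meas: "{\<omega>. (\<Sum>i<Suc m. snd (snd (\<omega> i))) \<le> K} \<in> sets S"
  proof -
    have "{\<omega>\<in>space S. (\<Sum>i<Suc m. snd (snd (\<omega> i))) \<le> K} \<in> sets S" by measurable
    then show ?thesis by (simp add: space_S)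
  qed
  have "emeasure S {\<omega>. (\<Sum>j\<le>m. Uj j \<omega>) < K} \<le> emeasure S {\<omega>. (\<Sum>i<Suc m. snd (snd (\<omega> i))) \<le> K}"
    by (rule emeasure_mono[OF sub meas])
  also have "\<dots> \<le> ennreal (exp K) * c2 ^ Suc m"
    unfolding c2_def by (rule chernoff[OF meas_c4])
  finally show ?thesis .
qed

lemma c2_real: "c2 = ennreal (enn2real c2)" "0 \<le> enn2real c2" "enn2real c2 < 1"
proof -
  have "c2 \<noteq> top" using c2_lt1 by (auto simp: top_unique)
  then show "c2 = ennreal (enn2real c2)" by (simp add: ennreal_enn2real_if)
  show "0 \<le> enn2real c2" by simp
  show "enn2real c2 < 1" using c2_lt1 \<open>c2 = ennreal (enn2real c2)\<close>
    by (metis ennreal_less_one_iff)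
qed

lemma Jval_upper:
  fixes p q x \<epsilon> R lb d l0 :: real and m :: nat and L :: "real \<Rightarrow> omega \<Rightarrow> real"
  assumes p: "0 < p" and q: "0 < q" and x: "0 \<le> x" and e: "0 < \<epsilon>" and R: "0 < R"
    and d: "0 < d" and lb: "0 \<le> lb" and l0: "lb \<le> l0"
    and L: "L \<in> admissible S p lb d l0 x"
  shows "Jval S p q lb d l0 x L \<le> ereal (x + p * \<epsilon> + p / R * (2 / q^2) + p / q *
     (exp (- ((l0 - lb) * exp (- d * \<epsilon>) * \<epsilon>) / 2) * 2 ^ Suc m + exp (p * R) * enn2real c2 ^ Suc m))"
proof -
  define K where "K = (l0 - lb) * exp (- d * \<epsilon>) * \<epsilon>"
  define E1 where "E1 = {\<omega>. K < Gam m \<omega>}"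
  define E2 where "E2 = {\<omega>. (\<Sum>j\<le>m. Uj j \<omega>) < p * R}"
  define inner where "inner \<omega> = (\<integral>\<^sup>+ s. indicator {s. 0 \<le> s \<and> ereal s < ruin_time p lb d l0 x L \<omega>} s * ennreal (exp (- q * s))
      \<partial>interval_measure (\<lambda>s. if s < 0 then 0 else L s \<omega>))" for \<omega>
  define a where "a = ennreal (x + p * \<epsilon>) + ennreal (p / R) * ennreal (2 / q^2)"
  have E1m[measurable]: "E1 \<in> sets S"
  proof -
    have "{\<omega>\<in>space S. K < Gam m \<omega>} \<in> sets S" unfolding Gam_def by measurable
    then show ?thesis unfolding E1_def by (simp add: space_S)
  qed
  have E2m[measurable]: "E2 \<in> sets S"
  proof -
    have "{\<omega>\<in>space S. (\<Sum>j\<le>m. Uj j \<omega>) < p * R} \<in> sets S" unfolding Uj_def by measurable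
    then show ?thesis unfolding E2_def by (simp add: space_S)
  qed
  have AE: "AE \<omega> in S. inner \<omega> \<le> a + ennreal (p / q) * (indicator E1 \<omega> + indicator E2 \<omega>)"
    using AE_good
  proof eventually_elim
    case (elim \<omega>)
    interpret path lb d l0 \<omega> using elim d lb l0 by unfold_locales
    define bb where "bb = (if Gam m \<omega> \<le> (l0 - lb) * exp (- d * \<epsilon>) * \<epsilon> \<and> p * R \<le> (\<Sum>j\<le>m. Uj j \<omega>) then 0 else (1::real))"
    have adm: "mono_on {0..} (\<lambda>t. L t \<omega>)" "\<forall>t\<ge>0. continuous (at_right t) (\<lambda>s. L s \<omega>)" "0 \<le> L 0 \<omega>"
      "\<forall>t\<ge>0. ereal t < ruin_time p lb d l0 x L \<omega> \<longrightarrow> L t \<omega> \<le> surplus p lb d l0 x t \<omega>"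
      using L unfolding admissible_def by (auto simp: space_S)
    have "inner \<omega> \<le> ennreal (x + p * \<epsilon>) + ennreal (p / R) * ennreal (2 / q^2) + ennreal (p * bb) * ennreal (1 / q)"
      unfolding inner_def by (rule pathwise_upper[OF p q x e R adm bb_def])
    also have "ennreal (p * bb) * ennreal (1 / q) \<le> ennreal (p / q) * (indicator E1 \<omega> + indicator E2 \<omega>)"
    proof (cases "bb = 0")
      case False
      then have "\<omega> \<in> E1 \<union> E2" unfolding bb_def E1_def E2_def K_def by (auto split: if_splits)
      then have "1 \<le> (indicator E1 \<omega> + indicator E2 \<omega> :: ennreal)" by (auto split: split_indicator)
      moreover have "ennreal (p * bb) * ennreal (1 / q) = ennreal (p / q)"
        using False p q unfolding bb_def by (simp add: ennreal_mult[symmetric] split: if_splits)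
      ultimately show ?thesis by (metis mult.right_neutral mult_left_mono zero_le)
    qed simp
    finally show ?case unfolding a_def by (simp add: add_mono)
  qed
  have "(\<integral>\<^sup>+ \<omega>. inner \<omega> \<partial>completion S) \<le> (\<integral>\<^sup>+ \<omega>. a + ennreal (p / q) * (indicator E1 \<omega> + indicator E2 \<omega>) \<partial>completion S)"
    by (rule nn_integral_mono_AE[OF AE_completion[OF AE]])
  also have "\<dots> = (\<integral>\<^sup>+ \<omega>. a + ennreal (p / q) * (indicator E1 \<omega> + indicator E2 \<omega>) \<partial>S)"
    by (rule nn_integral_completion)
  also have "\<dots> = a + ennreal (p / q) * (emeasure S E1 + emeasure S E2)"
  proof -
    interpret prob_space S by (rule S_prob)
    show ?thesis
      by (simp add: nn_integral_add nn_integral_cmult emeasure_space_1 space_S[symmetric])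
  qed
  also have "\<dots> \<le> a + ennreal (p / q) * (ennreal (exp (- K / 2)) * 2 ^ Suc m + ennreal (exp (p * R)) * c2 ^ Suc m)"
    unfolding E1_def E2_def
    by (intro add_mono mult_left_mono E1_bound E2_bound order_refl) auto
  also have "\<dots> = ennreal (x + p * \<epsilon> + p / R * (2 / q^2) + p / q *
     (exp (- K / 2) * 2 ^ Suc m + exp (p * R) * enn2real c2 ^ Suc m))"
  proof -
    have c: "c2 ^ Suc m = ennreal (enn2real c2 ^ Suc m)" using c2_real by (metis ennreal_power)
    have two: "(2::ennreal) ^ Suc m = ennreal (2 ^ Suc m)"
      by (metis ennreal_numeral ennreal_power zero_le_numeral)
    show ?thesis unfolding a_def c two using p q x e R c2_real(2)
      by (simp add: ennreal_mult[symmetric] ennreal_plus[symmetric] del: ennreal_plus)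
  qed
  finally have le: "(\<integral>\<^sup>+ \<omega>. inner \<omega> \<partial>completion S) \<le> ennreal (x + p * \<epsilon> + p / R * (2 / q^2) + p / q *
     (exp (- K / 2) * 2 ^ Suc m + exp (p * R) * enn2real c2 ^ Suc m))" .
  have nn: "0 \<le> x + p * \<epsilon> + p / R * (2 / q^2) + p / q * (exp (- K / 2) * 2 ^ Suc m + exp (p * R) * enn2real c2 ^ Suc m)"
    using p q x e R c2_real(2) by simp
  have "Jval S p q lb d l0 x L = enn2ereal (\<integral>\<^sup>+ \<omega>. inner \<omega> \<partial>completion S)"
    unfolding Jval_def inner_def ..
  also have "\<dots> \<le> enn2ereal (ennreal (x + p * \<epsilon> + p / R * (2 / q^2) + p / q *
     (exp (- K / 2) * 2 ^ Suc m + exp (p * R) * enn2real c2 ^ Suc m)))"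
    using le by (simp add: less_eq_ennreal.rep_eq)
  finally show ?thesis using nn unfolding K_def by (simp add: enn2ereal_ennreal)
qed

end


lemma Lleft_zero: "Lleft (\<lambda>t \<omega>. 0) t \<omega> = 0"
  unfolding Lleft_def by (auto intro!: tendsto_Lim trivial_limit_at_left_real)

lemma zero_admissible:
  "(\<lambda>t \<omega>. 0) \<in> admissible S p lb d l0 x"
  unfolding admissible_def
proof (intro CollectI conjI ballI allI impI)
  fix \<omega> t assume t: "0 \<le> t" and lt: "ereal t < ruin_time p lb d l0 x (\<lambda>t \<omega>. 0) \<omega>"
  show "(0::real) \<le> surplus p lb d l0 x t \<omega>"
  proof (rule ccontr)
    assume "\<not> 0 \<le> surplus p lb d l0 x t \<omega>"
    then have "t \<in> {t. 0 \<le> t \<and> surplus p lb d l0 x t \<omega> - Lleft (\<lambda>t \<omega>. 0) t \<omega> < 0}"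
      using t by (simp add: Lleft_zero)
    then have "ruin_time p lb d l0 x (\<lambda>t \<omega>. 0) \<omega> \<le> ereal t"
      unfolding ruin_time_def by (intro Inf_lower) auto
    then show False using lt by simp
  qed
next
  fix t :: real and B :: "real set"
  have "(\<lambda>\<omega>. 0::real) -` B \<inter> space S = (if (0::real) \<in> B then space S else {})" by auto
  then show "(\<lambda>\<omega>. 0::real) -` B \<inter> space S \<in> filt S lb d l0 t"
    unfolding filt_def by (auto intro: sigma_sets_top sigma_sets.Empty)
qed (auto intro: mono_onI)

lemma ereal_minus_bound: "a \<le> ereal (x + y) \<Longrightarrow> a - ereal x \<le> ereal y"
  by (cases a) auto

theorem proposition5p2:
  fixes p q d beta lb eta lav :: real and FY FU :: "real measure"
  assumes "p > 0" and "q > 0" and "d > 0" and "beta > 0" and "lb \<ge> 0"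
    and "prob_space FY" and "sets FY = sets borel" and "AE y in FY. y > 0" and "integrable FY (\<lambda>y. y)"
    and "prob_space FU" and "sets FU = sets borel" and "AE u in FU. u > 0" and "integrable FU (\<lambda>u. u)"
    and "eta > 0"
    and "\<forall>l0\<ge>lb. ((\<lambda>t. (\<integral>\<omega>. Lam lb d l0 t \<omega> \<partial>Omega beta FY FU) / t) \<longlongrightarrow> lav) at_top"
    and "p = (1 + eta) * (\<integral>u. u \<partial>FU) * lav"
  shows "((\<lambda>l0. SUP x\<in>{0::real..}. Vfun p q d beta lb FY FU x l0 - ereal x) \<longlongrightarrow> 0) at_top"
proof -
  note p = \<open>p > 0\<close> and q = \<open>q > 0\<close> and d = \<open>d > 0\<close> and lb = \<open>lb \<ge> 0\<close>
  interpret model beta FY FU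
    using \<open>beta > 0\<close> \<open>prob_space FY\<close> \<open>sets FY = sets borel\<close> \<open>AE y in FY. y > 0\<close>
      \<open>prob_space FU\<close> \<open>sets FU = sets borel\<close> \<open>AE u in FU. u > 0\<close>
    by (simp add: model_def)
  define f where "f l0 = (SUP x\<in>{0::real..}. Vfun p q d beta lb FY FU x l0 - ereal x)" for l0
  have lower: "0 \<le> f l0" for l0
  proof -
    have "0 \<le> Jval S p q lb d l0 0 (\<lambda>t \<omega>. 0)" unfolding Jval_def by simp
    also have "\<dots> \<le> Vfun p q d beta lb FY FU 0 l0"
      unfolding Vfun_def by (rule SUP_upper[OF zero_admissible])
    also have "\<dots> = Vfun p q d beta lb FY FU 0 l0 - ereal 0" by (simp add: zero_ereal_def[symmetric])
    also have "\<dots> \<le> f l0" unfolding f_def by (rule SUP_upper) auto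
    finally show ?thesis .
  qed
  have upper: "\<forall>\<^sub>F l0 in at_top. f l0 \<le> ereal \<delta>" if \<delta>: "0 < \<delta>" for \<delta>
  proof -
    define \<epsilon> where "\<epsilon> = \<delta> / (4 * p)"
    define R where "R = 8 * p / (q^2 * \<delta>)"
    define c where "c = enn2real c2"
    have e: "0 < \<epsilon>" unfolding \<epsilon>_def using p \<delta> by simp
    have R: "0 < R" unfolding R_def using p q \<delta> by simp
    have pe: "p * \<epsilon> = \<delta> / 4" unfolding \<epsilon>_def using p by simp
    have pR: "p / R * (2 / q^2) = \<delta> / 4" unfolding R_def using p q \<delta> by (simp add: field_simps)
    have "(\<lambda>n. p / q * exp (p * R) * c ^ n) \<longlonglongrightarrow> p / q * exp (p * R) * 0"
      by (intro tendsto_mult tendsto_const LIMSEQ_power_zero) (use c2_real in \<open>auto simp: c_def\<close>)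
    then have "\<forall>\<^sub>F n in sequentially. p / q * exp (p * R) * c ^ n < \<delta> / 4"
      by (rule order_tendstoD(2)) (use \<delta> in simp)
    then obtain n0 where n0: "\<And>n. n0 \<le> n \<Longrightarrow> p / q * exp (p * R) * c ^ n < \<delta> / 4"
      unfolding eventually_sequentially by blast
    obtain m where m: "p / q * exp (p * R) * c ^ Suc m < \<delta> / 4"
      using n0[of "Suc n0"] by force
    define M where "M = p / q * 2 ^ Suc m"
    have M: "0 < M" unfolding M_def using p q by simp
    define C where "C = exp (- d * \<epsilon>) * \<epsilon>"
    have C: "0 < C" unfolding C_def using e by simp
    define N where "N = lb + max 0 (- 2 * ln (\<delta> / (4 * M))) / C"
    have "\<forall>\<^sub>F l0 in at_top. N \<le> l0" by (rule eventually_ge_at_top)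
    then show ?thesis
    proof eventually_elim
      case (elim l0)
      have "0 \<le> max 0 (- 2 * ln (\<delta> / (4 * M))) / C" using C by simp
      then have l0: "lb \<le> l0" using elim unfolding N_def by linarith
      define K where "K = (l0 - lb) * exp (- d * \<epsilon>) * \<epsilon>"
      have "max 0 (- 2 * ln (\<delta> / (4 * M))) / C \<le> l0 - lb" using elim unfolding N_def by simp
      then have "max 0 (- 2 * ln (\<delta> / (4 * M))) \<le> (l0 - lb) * C" using C by (simp add: field_simps)
      then have "- 2 * ln (\<delta> / (4 * M)) \<le> K" unfolding K_def C_def by (simp add: mult.assoc)
      then have "- K / 2 \<le> ln (\<delta> / (4 * M))" by simp
      moreover have dm: "0 < \<delta> / (4 * M)" using M \<delta> by simp
      ultimately have "exp (- K / 2) \<le> exp (ln (\<delta> / (4 * M)))" by (simp only: exp_le_cancel_iff)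
      then have "exp (- K / 2) \<le> \<delta> / (4 * M)" using exp_ln[OF dm] by simp
      then have "M * exp (- K / 2) \<le> M * (\<delta> / (4 * M))" by (rule mult_left_mono) (use M in simp)
      moreover have eqM: "M * (\<delta> / (4 * M)) = \<delta> / 4" using M by (simp add: field_simps)
      moreover have eqL: "p / q * (exp (- K / 2) * 2 ^ Suc m) = M * exp (- K / 2)"
        unfolding M_def by (simp add: algebra_simps)
      ultimately have K2: "p / q * (exp (- K / 2) * 2 ^ Suc m) \<le> \<delta> / 4" by simp
      have "Vfun p q d beta lb FY FU x l0 - ereal x \<le> ereal \<delta>" if x: "x \<in> {0..}" for x
      proof (rule ereal_minus_bound)
        show "Vfun p q d beta lb FY FU x l0 \<le> ereal (x + \<delta>)"
          unfolding Vfun_def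
        proof (rule SUP_least)
          fix L assume L: "L \<in> admissible S p lb d l0 x"
          have "Jval S p q lb d l0 x L \<le> ereal (x + p * \<epsilon> + p / R * (2 / q^2) + p / q *
             (exp (- ((l0 - lb) * exp (- d * \<epsilon>) * \<epsilon>) / 2) * 2 ^ Suc m + exp (p * R) * enn2real c2 ^ Suc m))"
            by (rule Jval_upper[OF p q _ e R d lb l0 L]) (use x in auto)
          also have "\<dots> \<le> ereal (x + \<delta>)"
          proof -
            have "p / q * (exp (- K / 2) * 2 ^ Suc m + exp (p * R) * c ^ Suc m)
                = p / q * (exp (- K / 2) * 2 ^ Suc m) + p / q * exp (p * R) * c ^ Suc m"
              by (simp add: algebra_simps)
            then show ?thesis using pe pR K2 m unfolding K_def c_def by simp
          qed
          finally show "Jval S p q lb d l0 x L \<le> ereal (x + \<delta>)" .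
        qed
      qed
      then show "f l0 \<le> ereal \<delta>" unfolding f_def by (rule SUP_least)
    qed
  qed
  have "(f \<longlongrightarrow> 0) at_top"
  proof (rule order_tendstoI)
    fix a :: ereal assume "a < 0"
    then have "\<forall>l0. a < f l0" using lower by (metis order_less_le_trans)
    then show "\<forall>\<^sub>F l0 in at_top. a < f l0" by (intro always_eventually)
  next
    fix b :: ereal assume "0 < b"
    then obtain \<delta> where "0 < ereal \<delta>" "ereal \<delta> < b" using ereal_dense2 by blast
    then have "\<forall>\<^sub>F l0 in at_top. f l0 \<le> ereal \<delta>" by (intro upper) auto
    then show "\<forall>\<^sub>F l0 in at_top. f l0 < b"
      by eventually_elim (use \<open>ereal \<delta> < b\<close> in auto)
  qed
  then show ?thesis unfolding f_def .
qed



end
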